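(* Let $\kappa>0$, $u_0>0$, and let $u$ be the solution of $\frac{d}{dr}\big(u'/\sqrt{1+u'^2}\big)=\kappa u$, $u(0)=u_0$, $u'(0)=0$. Let $a>0$ and $0\le\gamma<\pi/2$ be such that $u$ is defined on $[0,a)$ and $\sin\psi(a)=\cos\gamma$, where $\sin\psi=u'/\sqrt{1+u'^2}$ (extended continuously to $r=a$). Then $$\frac{\cos\gamma}{a\kappa}-\frac a{\cos\gamma}+\frac{a\tan\gamma}2+\frac a{2\cos^2\gamma}\Big(\frac\pi2-\gamma\Big)<u_0<u_0^+<\frac{\cos\gamma}{a\kappa},$$ where $u_0^+$ is the number with $F(u_0^+;1/(\kappa u_0))=\cos\gamma/\kappa$, for $$F(x;R)=a(R+x)-\frac a2\sqrt{R^2-a^2}-\frac{R^2}2\arcsin\Big(\frac aR\Big).$$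
   Context: $u$ is the profile of a $\kappa$-cylindrical capillary surface $z=u(x)$ between vertical plates $x=\pm a$ with contact angle $\gamma$; $u_0$ is the center height. The function $x\mapsto F(x;R)$ is strictly increasing. *)

theory Defs
  imports "HOL-Analysis.Analysis"
begin

definition capF :: "real \<Rightarrow> real \<Rightarrow> real \<Rightarrow> real" where
  "capF a x R = a * (R + x) - (a / 2) * sqrt (R\<^sup>2 - a\<^sup>2) - (R\<^sup>2 / 2) * arcsin (a / R)"

end

theory Submission
  imports Defs
begin


definition Qf :: "real \<Rightarrow> real \<Rightarrow> real" where
  "Qf R x = x * sqrt (R\<^sup>2 - x\<^sup>2) / 2 + R\<^sup>2 / 2 * arcsin (x / R)"

lemma sqrt_deriv:
  assumes "-R < x" "x < R"
  shows "((\<lambda>x. sqrt (R\<^sup>2 - x\<^sup>2)) has_real_derivative (- x / sqrt (R\<^sup>2 - x\<^sup>2))) (at x)"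
proof -
  have p: "R\<^sup>2 - x\<^sup>2 > 0" proof -
    have "(R - x) * (R + x) > 0" using assms by simp
    thus ?thesis by (simp add: power2_eq_square algebra_simps)
  qed
  have i: "((\<lambda>x. R\<^sup>2 - x\<^sup>2) has_real_derivative (0 - real 2 * x ^ (2 - Suc 0))) (at x)"
    by (rule DERIV_diff[OF DERIV_const DERIV_pow])
  have "((\<lambda>x. sqrt (R\<^sup>2 - x\<^sup>2)) has_real_derivative
      inverse (sqrt (R\<^sup>2 - x\<^sup>2)) / 2 * (0 - real 2 * x ^ (2 - Suc 0))) (at x)"
    by (rule DERIV_chain2[OF DERIV_real_sqrt[OF p] i])
  moreover have "inverse (sqrt (R\<^sup>2 - x\<^sup>2)) / 2 * (0 - real 2 * x ^ (2 - Suc 0))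
      = - x / sqrt (R\<^sup>2 - x\<^sup>2)"
    by (simp add: field_simps)
  ultimately show ?thesis by simp
qed

lemma Qf_deriv:
  assumes "R > 0" "-R < x" "x < R"
  shows "(Qf R has_real_derivative sqrt (R\<^sup>2 - x\<^sup>2)) (at x)"
proof -
  have p: "R\<^sup>2 - x\<^sup>2 > 0" proof -
    have "(R - x) * (R + x) > 0" using assms by simp
    thus ?thesis by (simp add: power2_eq_square algebra_simps)
  qed
  have x1: "-1 < x / R" "x / R < 1" using assms by (auto simp: field_simps)
  have ar: "(arcsin has_real_derivative inverse (sqrt (1 - (x/R)\<^sup>2))) (at (x/R))"
    using DERIV_arcsin[OF x1] .
  have dd: "((\<lambda>y. y / R) has_real_derivative 1 / R) (at x)"
    by (rule DERIV_cdivide[OF DERIV_ident])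
  have ar2: "((\<lambda>y. arcsin (y / R)) has_real_derivative inverse (sqrt (1 - (x/R)\<^sup>2)) * (1 / R)) (at x)"
    using DERIV_chain2[where g="\<lambda>y. y/R" and x=x, OF ar dd] by simp
  have e: "sqrt (1 - (x/R)\<^sup>2) = sqrt (R\<^sup>2 - x\<^sup>2) / R"
  proof -
    have "1 - (x/R)\<^sup>2 = (R\<^sup>2 - x\<^sup>2) / R\<^sup>2" using assms by (simp add: field_simps power2_eq_square)
    thus ?thesis using assms by (simp add: real_sqrt_divide)
  qed
  have m: "((\<lambda>x. x * sqrt (R\<^sup>2 - x\<^sup>2)) has_real_derivative
        x * (- x / sqrt (R\<^sup>2 - x\<^sup>2)) + 1 * sqrt (R\<^sup>2 - x\<^sup>2)) (at x)"
      by (rule DERIV_mult'[OF DERIV_ident sqrt_deriv[OF assms(2,3)]])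
  have d: "(Qf R has_real_derivative
        (x * (- x / sqrt (R\<^sup>2 - x\<^sup>2)) + 1 * sqrt (R\<^sup>2 - x\<^sup>2)) / 2
        + R\<^sup>2 / 2 * (inverse (sqrt (1 - (x/R)\<^sup>2)) * (1 / R))) (at x)"
    unfolding Qf_def[abs_def]
    by (rule DERIV_add[OF DERIV_cdivide[OF m] DERIV_cmult[OF ar2]])
  have s: "sqrt (R\<^sup>2 - x\<^sup>2) > 0" using p by simp
  have "(x * (- x / sqrt (R\<^sup>2 - x\<^sup>2)) + 1 * sqrt (R\<^sup>2 - x\<^sup>2)) / 2
        + R\<^sup>2 / 2 * (inverse (sqrt (1 - (x/R)\<^sup>2)) * (1 / R)) = sqrt (R\<^sup>2 - x\<^sup>2)"
  proof -
    have s2: "(sqrt (R\<^sup>2 - x\<^sup>2))\<^sup>2 = R\<^sup>2 - x\<^sup>2" using p by simp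
    show ?thesis unfolding e using s assms(1) s2
      by (simp add: field_simps power2_eq_square)
  qed
  with d show ?thesis by simp
qed

lemma Qf_cont: assumes "R > 0" shows "continuous_on {-R..R} (Qf R)"
  unfolding Qf_def[abs_def] using assms
  by (intro continuous_intros) (auto simp: field_simps)

lemma Qf_0: "Qf R 0 = 0" by (simp add: Qf_def)

lemma phi_mono: fixes x y :: real assumes "x \<le> y"
  shows "x / sqrt (1 + x\<^sup>2) \<le> y / sqrt (1 + y\<^sup>2)"
proof -
  have px: "sqrt (1 + x\<^sup>2) > 0" and py: "sqrt (1 + y\<^sup>2) > 0"
    by (simp_all add: add_pos_nonneg)
  have sq: "(x * sqrt (1 + y\<^sup>2))\<^sup>2 = x\<^sup>2 + x\<^sup>2 * y\<^sup>2"
    "(y * sqrt (1 + x\<^sup>2))\<^sup>2 = y\<^sup>2 + x\<^sup>2 * y\<^sup>2"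
    by (simp_all add: power_mult_distrib algebra_simps)
  have "x * sqrt (1 + y\<^sup>2) \<le> y * sqrt (1 + x\<^sup>2)"
  proof (cases "x \<ge> 0")
    case True
    then have "x\<^sup>2 \<le> y\<^sup>2" using assms by (simp add: power_mono)
    then have "(x * sqrt (1 + y\<^sup>2))\<^sup>2 \<le> (y * sqrt (1 + x\<^sup>2))\<^sup>2" using sq by simp
    moreover have "0 \<le> y * sqrt (1 + x\<^sup>2)" using True assms by simp
    ultimately show ?thesis by (rule power2_le_imp_le)
  next
    case False
    show ?thesis
    proof (cases "y \<ge> 0")
      case True
      have "x * sqrt (1 + y\<^sup>2) \<le> 0" using False by (simp add: mult_nonpos_nonneg)
      moreover have "0 \<le> y * sqrt (1 + x\<^sup>2)" using True by simp
      ultimately show ?thesis by linarith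
    next
      case F2: False
      then have "(-y)\<^sup>2 \<le> (-x)\<^sup>2" using assms by (intro power_mono) auto
      then have "y\<^sup>2 \<le> x\<^sup>2" by simp
      then have "(-(y * sqrt (1 + x\<^sup>2)))\<^sup>2 \<le> (-(x * sqrt (1 + y\<^sup>2)))\<^sup>2" using sq by simp
      moreover have "0 \<le> -(x * sqrt (1 + y\<^sup>2))" using False by (simp add: mult_nonpos_nonneg)
      ultimately have "-(y * sqrt (1 + x\<^sup>2)) \<le> -(x * sqrt (1 + y\<^sup>2))" by (rule power2_le_imp_le)
      then show ?thesis by simp
    qed
  qed
  then show ?thesis using px py by (simp add: divide_simps mult.commute)
qed

lemma phi_q: fixes x R :: real assumes "0 \<le> x" "x < R"
  shows "(x / sqrt (R\<^sup>2 - x\<^sup>2)) / sqrt (1 + (x / sqrt (R\<^sup>2 - x\<^sup>2))\<^sup>2) = x / R"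
proof -
  have p: "R\<^sup>2 - x\<^sup>2 > 0" proof -
    have "(R - x) * (R + x) > 0" using assms by simp
    thus ?thesis by (simp add: power2_eq_square algebra_simps)
  qed
  have s: "sqrt (R\<^sup>2 - x\<^sup>2) > 0" using p by simp
  have "1 + (x / sqrt (R\<^sup>2 - x\<^sup>2))\<^sup>2 = R\<^sup>2 / (R\<^sup>2 - x\<^sup>2)"
    using p s by (simp add: power_divide field_simps)
  then have "sqrt (1 + (x / sqrt (R\<^sup>2 - x\<^sup>2))\<^sup>2) = R / sqrt (R\<^sup>2 - x\<^sup>2)"
    using assms by (simp add: real_sqrt_divide)
  then show ?thesis using s assms by (simp add: field_simps)
qed

lemma incr:
  fixes f f' :: "real \<Rightarrow> real"
  assumes "p < q" "\<And>x. p < x \<Longrightarrow> x < q \<Longrightarrow> (f has_real_derivative f' x) (at x)"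
    "\<And>x. p < x \<Longrightarrow> x < q \<Longrightarrow> f' x > 0" "continuous_on {p..q} f"
  shows "f p < f q"
  using DERIV_pos_imp_increasing_open[of p q f] assms by blast

lemma incr_le:
  fixes f f' :: "real \<Rightarrow> real"
  assumes "p \<le> q" "\<And>x. p < x \<Longrightarrow> x < q \<Longrightarrow> (f has_real_derivative f' x) (at x)"
    "\<And>x. p < x \<Longrightarrow> x < q \<Longrightarrow> f' x \<ge> 0" "continuous_on {p..q} f"
  shows "f p \<le> f q"
  using DERIV_nonneg_imp_increasing_open[of p q f] assms by blast

lemma lim_ge:
  fixes f :: "real \<Rightarrow> real"
  assumes "(f \<longlongrightarrow> L) (at_left a)" "c < a" "\<And>t. c < t \<Longrightarrow> t < a \<Longrightarrow> m \<le> f t"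
  shows "m \<le> L"
proof (rule tendsto_le[OF _ assms(1) tendsto_const])
  show "at_left a \<noteq> bot" by simp
  show "\<forall>\<^sub>F x in at_left a. m \<le> f x"
    using eventually_at_left_real[OF assms(2)] assms(3) by (auto elim: eventually_mono)
qed



lemma inc_lim:
  fixes f f' :: "real \<Rightarrow> real"
  assumes "p < a" "\<And>x. p < x \<Longrightarrow> x < a \<Longrightarrow> (f has_real_derivative f' x) (at x)"
    "\<And>x. p < x \<Longrightarrow> x < a \<Longrightarrow> f' x > 0" "\<And>b. b < a \<Longrightarrow> continuous_on {p..b} f"
    "(f \<longlongrightarrow> L) (at_left a)"
  shows "f p < L"
proof -
  define m where "m = (p + a) / 2"
  have m: "p < m" "m < a" using assms(1) by (auto simp: m_def)
  have "f p < f m"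
    by (rule incr[where f=f and f'=f']) (use m assms(2,3,4) in auto)
  moreover have "f m \<le> L"
  proof (rule lim_ge[OF assms(5) m(2)])
    fix t assume t: "m < t" "t < a"
    have "f m < f t"
    proof (rule incr[where f=f and f'=f'])
      show "continuous_on {m..t} f"
        by (rule continuous_on_subset[OF assms(4)[OF t(2)]]) (use m in auto)
    qed (use m t assms(2,3) in auto)
    then show "f m \<le> f t" by simp
  qed
  ultimately show ?thesis by simp
qed

lemma circ_deriv:
  assumes "-R < x" "x < R"
  shows "((\<lambda>x. c - sqrt (R\<^sup>2 - x\<^sup>2)) has_real_derivative x / sqrt (R\<^sup>2 - x\<^sup>2)) (at x)"
  using DERIV_diff[OF DERIV_const sqrt_deriv[OF assms]] by simp

lemma alg:
  fixes a c K u0 t th :: real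
  assumes "a > 0" "c > 0" "K > 0"
    "c / K < (u0 + a / c) * a - (a * (a * t) / 2 + (a / c)\<^sup>2 / 2 * th)"
  shows "c / (a * K) - a / c + a * t / 2 + a / (2 * c\<^sup>2) * th < u0"
proof -
  have "c / (a * K) - a / c + a * t / 2 + a / (2 * c\<^sup>2) * th
      = (c / K - ((u0 + a / c) * a - (a * (a * t) / 2 + (a / c)\<^sup>2 / 2 * th))) / a + u0"
    using assms(1,2,3) by (simp add: field_simps power2_eq_square)
  also have "\<dots> < u0" using assms by (simp add: divide_neg_pos)
  finally show ?thesis .
qed

theorem mainTheorem10:
  fixes \<kappa> u\<^sub>0 a \<gamma> :: real and u u' :: "real \<Rightarrow> real"
  assumes "\<kappa> > 0" and "u\<^sub>0 > 0" and "a > 0"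
    and "0 \<le> \<gamma>" and "\<gamma> < pi / 2"
    and "\<And>r. r \<in> {0..<a} \<Longrightarrow> (u has_real_derivative u' r) (at r within {0..<a})"
    and "\<And>r. r \<in> {0..<a} \<Longrightarrow>
          ((\<lambda>s. u' s / sqrt (1 + (u' s)\<^sup>2)) has_real_derivative \<kappa> * u r) (at r within {0..<a})"
    and "u 0 = u\<^sub>0" and "u' 0 = 0"
    and "((\<lambda>s. u' s / sqrt (1 + (u' s)\<^sup>2)) \<longlongrightarrow> cos \<gamma>) (at_left a)"
    and "capF a u\<^sub>0\<^sub>p (1 / (\<kappa> * u\<^sub>0)) = cos \<gamma> / \<kappa>"
  shows "cos \<gamma> / (a * \<kappa>) - a / cos \<gamma> + a * tan \<gamma> / 2
           + a / (2 * (cos \<gamma>)\<^sup>2) * (pi / 2 - \<gamma>) < u\<^sub>0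
         \<and> u\<^sub>0 < u\<^sub>0\<^sub>p \<and> u\<^sub>0\<^sub>p < cos \<gamma> / (a * \<kappa>)"
proof -
  note k = assms(1) and u0 = assms(2) and a0 = assms(3)
  define s where "s = (\<lambda>s. u' s / sqrt (1 + (u' s)\<^sup>2))"
  have cg: "cos \<gamma> > 0" using assms(4,5) by (intro cos_gt_zero_pi) auto
  have sqp: "\<And>t::real. sqrt (1 + t\<^sup>2) > 0" by (simp add: add_pos_nonneg)
  have du: "\<And>r. 0 < r \<Longrightarrow> r < a \<Longrightarrow> (u has_real_derivative u' r) (at r)"
  proof -
    fix r :: real assume r: "0 < r" "r < a"
    have "(u has_real_derivative u' r) (at r within {0<..<a})"
      by (rule DERIV_subset[OF assms(6)]) (use r in auto)
    thus "(u has_real_derivative u' r) (at r)" using at_within_open[of r "{0<..<a}"] r by simp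
  qed
  have ds: "\<And>r. 0 < r \<Longrightarrow> r < a \<Longrightarrow> (s has_real_derivative \<kappa> * u r) (at r)"
  proof -
    fix r :: real assume r: "0 < r" "r < a"
    have "(s has_real_derivative \<kappa> * u r) (at r within {0<..<a})"
      unfolding s_def by (rule DERIV_subset[OF assms(7)]) (use r in auto)
    thus "(s has_real_derivative \<kappa> * u r) (at r)" using at_within_open[of r "{0<..<a}"] r by simp
  qed
  have cu: "continuous_on {0..<a} u"
    unfolding continuous_on_eq_continuous_within using assms(6) DERIV_continuous by blast
  have cs: "continuous_on {0..<a} s"
    unfolding continuous_on_eq_continuous_within s_def using assms(7) DERIV_continuous by blast
  have cub: "\<And>b. b < a \<Longrightarrow> continuous_on {0..b} u"
    by (rule continuous_on_subset[OF cu]) auto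
  have csb: "\<And>b. b < a \<Longrightarrow> continuous_on {0..b} s"
    by (rule continuous_on_subset[OF cs]) auto
  have s0: "s 0 = 0" using assms(9) by (simp add: s_def)
  have slim: "(s \<longlongrightarrow> cos \<gamma>) (at_left a)" using assms(10) by (simp add: s_def)
  have sgn1: "u' r \<ge> 0" if "s r \<ge> 0" for r
    using sqp[of "u' r"] that by (simp add: s_def zero_le_divide_iff)
  have sgn2: "u' r > 0" if "s r > 0" for r
    using sqp[of "u' r"] that by (simp add: s_def zero_less_divide_iff)

  have upos: "\<And>r. 0 \<le> r \<Longrightarrow> r < a \<Longrightarrow> u r > 0"
  proof (rule ccontr)
    fix r1 assume r1: "0 \<le> r1" "r1 < a" "\<not> u r1 > 0"
    define Z where "Z = {0..r1} \<inter> u -` {..0}"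
    have cZ: "closed Z" unfolding Z_def
      by (rule continuous_closed_preimage[OF cub[OF r1(2)]]) auto
    have nZ: "r1 \<in> Z" using r1 by (auto simp: Z_def)
    have bZ: "bdd_below Z" unfolding Z_def by (rule bdd_belowI[where m=0]) auto
    define z where "z = Inf Z"
    have zZ: "z \<in> Z" unfolding z_def using closed_contains_Inf[OF _ bZ cZ] nZ by blast
    have zle: "\<And>x. x \<in> Z \<Longrightarrow> z \<le> x" unfolding z_def using cInf_lower[OF _ bZ] by blast
    have z0: "0 \<le> z" "z \<le> r1" "u z \<le> 0" using zZ by (auto simp: Z_def)
    have zpos: "0 < z" using z0 assms(8) u0 by (cases "z = 0") auto
    have za: "z < a" using z0 r1 by simp
    have ubelow: "\<And>x. 0 \<le> x \<Longrightarrow> x < z \<Longrightarrow> u x > 0"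
    proof (rule ccontr)
      fix x assume x: "0 \<le> x" "x < z" "\<not> u x > 0"
      then have "x \<in> Z" using z0 by (auto simp: Z_def)
      then show False using zle x by fastforce
    qed
    have sn: "\<And>x. 0 < x \<Longrightarrow> x < z \<Longrightarrow> s x \<ge> 0"
    proof -
      fix x assume x: "0 < x" "x < z"
      have "s 0 \<le> s x"
      proof (rule incr_le[where f=s and f'="\<lambda>y. \<kappa> * u y"])
        show "continuous_on {0..x} s" using csb x za by simp
        show "\<And>y. 0 < y \<Longrightarrow> y < x \<Longrightarrow> (s has_real_derivative \<kappa> * u y) (at y)"
          using ds x za by simp
        show "\<And>y. 0 < y \<Longrightarrow> y < x \<Longrightarrow> 0 \<le> \<kappa> * u y"
          using ubelow x k by (simp add: less_imp_le)
      qed (use x in simp)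
      then show "s x \<ge> 0" using s0 by simp
    qed
    have "u 0 \<le> u z"
    proof (rule incr_le[where f=u and f'=u'])
      show "continuous_on {0..z} u" using cub za by simp
      show "\<And>y. 0 < y \<Longrightarrow> y < z \<Longrightarrow> (u has_real_derivative u' y) (at y)"
        using du za by simp
      show "\<And>y. 0 < y \<Longrightarrow> y < z \<Longrightarrow> 0 \<le> u' y"
        using sn sgn1 by simp
    qed (use zpos in simp)
    then show False using z0 assms(8) u0 by simp
  qed

  have spos: "\<And>r. 0 < r \<Longrightarrow> r < a \<Longrightarrow> s r > 0"
  proof -
    fix r assume r: "0 < r" "r < a"
    have "s 0 < s r"
    proof (rule incr[where f=s and f'="\<lambda>y. \<kappa> * u y"])
      show "continuous_on {0..r} s" using csb r by simp
      show "\<And>y. 0 < y \<Longrightarrow> y < r \<Longrightarrow> (s has_real_derivative \<kappa> * u y) (at y)"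
        using ds r by simp
      show "\<And>y. 0 < y \<Longrightarrow> y < r \<Longrightarrow> 0 < \<kappa> * u y"
        using upos r k by simp
    qed (use r in simp)
    then show "s r > 0" using s0 by simp
  qed
  have u'pos: "\<And>r. 0 < r \<Longrightarrow> r < a \<Longrightarrow> u' r > 0" using spos sgn2 by blast
  have uinc: "\<And>x y. 0 \<le> x \<Longrightarrow> x < y \<Longrightarrow> y < a \<Longrightarrow> u x < u y"
  proof -
    fix x y :: real assume xy: "0 \<le> x" "x < y" "y < a"
    show "u x < u y"
    proof (rule incr[where f=u and f'=u'])
      show "continuous_on {x..y} u" by (rule continuous_on_subset[OF cub[OF xy(3)]]) (use xy in auto)
      show "\<And>t. x < t \<Longrightarrow> t < y \<Longrightarrow> (u has_real_derivative u' t) (at t)"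
        using du xy by simp
      show "\<And>t. x < t \<Longrightarrow> t < y \<Longrightarrow> 0 < u' t"
        using u'pos xy by simp
    qed (use xy in simp)
  qed

  define R where "R = 1 / (\<kappa> * u\<^sub>0)"
  have Rpos: "R > 0" using k u0 by (simp add: R_def)
  have kR: "\<kappa> * u\<^sub>0 = 1 / R" using k u0 by (simp add: R_def)
  have dlin: "\<And>x c. ((\<lambda>y. y / c) has_real_derivative 1 / c) (at x)"
    by (rule DERIV_cdivide[OF DERIV_ident])

  have gpos: "\<And>r. 0 < r \<Longrightarrow> r < a \<Longrightarrow> s r > r / R"
  proof -
    fix r assume r: "0 < r" "r < a"
    have "s 0 - 0 / R < s r - r / R"
    proof (rule incr[where f="\<lambda>x. s x - x / R" and f'="\<lambda>x. \<kappa> * u x - 1 / R"])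
      show "continuous_on {0..r} (\<lambda>x. s x - x / R)"
        using csb r Rpos by (intro continuous_intros) auto
      show "\<And>y. 0 < y \<Longrightarrow> y < r \<Longrightarrow> ((\<lambda>x. s x - x / R) has_real_derivative \<kappa> * u y - 1 / R) (at y)"
        using ds r by (intro DERIV_diff dlin) auto
      show "\<And>y. 0 < y \<Longrightarrow> y < r \<Longrightarrow> 0 < \<kappa> * u y - 1 / R"
      proof -
        fix y assume y: "0 < y" "y < r"
        have "u\<^sub>0 < u y" using uinc[of 0 y] y r assms(8) by simp
        then have "\<kappa> * u\<^sub>0 < \<kappa> * u y" using k by simp
        then show "0 < \<kappa> * u y - 1 / R" using kR by simp
      qed
    qed (use r in simp)
    then show "s r > r / R" using s0 by simp
  qed

  have aR: "a < R"
  proof -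
    have "s 0 - 0 / R < cos \<gamma> - a / R"
    proof (rule inc_lim[where f="\<lambda>x. s x - x / R" and f'="\<lambda>x. \<kappa> * u x - 1 / R"])
      show "\<And>b. b < a \<Longrightarrow> continuous_on {0..b} (\<lambda>x. s x - x / R)"
        using csb Rpos by (intro continuous_intros) auto
      show "\<And>y. 0 < y \<Longrightarrow> y < a \<Longrightarrow> ((\<lambda>x. s x - x / R) has_real_derivative \<kappa> * u y - 1 / R) (at y)"
        using ds by (intro DERIV_diff dlin) auto
      show "\<And>y. 0 < y \<Longrightarrow> y < a \<Longrightarrow> 0 < \<kappa> * u y - 1 / R"
      proof -
        fix y assume y: "0 < y" "y < a"
        have "u\<^sub>0 < u y" using uinc[of 0 y] y assms(8) by simp
        then have "\<kappa> * u\<^sub>0 < \<kappa> * u y" using k by simp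
        then show "0 < \<kappa> * u y - 1 / R" using kR by simp
      qed
      show "((\<lambda>x. s x - x / R) \<longlongrightarrow> cos \<gamma> - a / R) (at_left a)"
        using Rpos by (intro tendsto_intros slim) auto
    qed (use a0 in simp)
    then have "a / R < cos \<gamma>" using s0 by simp
    also have "\<dots> \<le> 1" by simp
    finally show ?thesis using Rpos by simp
  qed
  have phi_lt: "x < y" if "x / sqrt (1 + x\<^sup>2) < y / sqrt (1 + y\<^sup>2)" for x y :: real
    using phi_mono[of y x] that by (cases "x < y") auto

  have E: "u b > u\<^sub>0 + R - sqrt (R\<^sup>2 - b\<^sup>2)" if b: "0 < b" "b < a" for b
  proof -
    have "u 0 - (u\<^sub>0 + R - sqrt (R\<^sup>2 - 0\<^sup>2)) < u b - (u\<^sub>0 + R - sqrt (R\<^sup>2 - b\<^sup>2))"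
    proof (rule incr[where f="\<lambda>x. u x - (u\<^sub>0 + R - sqrt (R\<^sup>2 - x\<^sup>2))"
          and f'="\<lambda>x. u' x - x / sqrt (R\<^sup>2 - x\<^sup>2)"])
      show "continuous_on {0..b} (\<lambda>x. u x - (u\<^sub>0 + R - sqrt (R\<^sup>2 - x\<^sup>2)))"
        using cub b by (intro continuous_intros) auto
      show "((\<lambda>x. u x - (u\<^sub>0 + R - sqrt (R\<^sup>2 - x\<^sup>2))) has_real_derivative
          u' y - y / sqrt (R\<^sup>2 - y\<^sup>2)) (at y)" if y: "0 < y" "y < b" for y
        using y b aR Rpos by (intro DERIV_diff du circ_deriv) auto
      show "0 < u' y - y / sqrt (R\<^sup>2 - y\<^sup>2)" if y: "0 < y" "y < b" for y
      proof -
        have "(y / sqrt (R\<^sup>2 - y\<^sup>2)) / sqrt (1 + (y / sqrt (R\<^sup>2 - y\<^sup>2))\<^sup>2) < s y"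
          using phi_q[of y R] gpos[of y] y b aR by simp
        then have "y / sqrt (R\<^sup>2 - y\<^sup>2) < u' y" unfolding s_def by (rule phi_lt)
        then show ?thesis by simp
      qed
    qed (use b in simp)
    then show ?thesis using assms(8) Rpos by simp
  qed

  have capF_eq: "capF a x R = a * (R + x) - Qf R a" for x
    by (simp add: capF_def Qf_def)
  have Qc: "continuous_on {0..c} (Qf R)" if "c \<le> R" for c
    by (rule continuous_on_subset[OF Qf_cont[OF Rpos]]) (use that Rpos in auto)

  have part2: "u\<^sub>0 < u\<^sub>0\<^sub>p"
  proof -
    have "s 0 / \<kappa> - ((u\<^sub>0 + R) * 0 - Qf R 0) < cos \<gamma> / \<kappa> - ((u\<^sub>0 + R) * a - Qf R a)"
    proof (rule inc_lim[where f="\<lambda>x. s x / \<kappa> - ((u\<^sub>0 + R) * x - Qf R x)"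
          and f'="\<lambda>x. \<kappa> * u x / \<kappa> - ((u\<^sub>0 + R) * 1 - sqrt (R\<^sup>2 - x\<^sup>2))"])
      show "continuous_on {0..b} (\<lambda>x. s x / \<kappa> - ((u\<^sub>0 + R) * x - Qf R x))" if "b < a" for b
        using csb[OF that] Qc[of b] that aR k by (intro continuous_intros) auto
      show "((\<lambda>x. s x / \<kappa> - ((u\<^sub>0 + R) * x - Qf R x)) has_real_derivative
          \<kappa> * u y / \<kappa> - ((u\<^sub>0 + R) * 1 - sqrt (R\<^sup>2 - y\<^sup>2))) (at y)" if y: "0 < y" "y < a" for y
        using y aR Rpos
        by (intro DERIV_diff DERIV_cdivide ds DERIV_cmult DERIV_ident Qf_deriv) auto
      show "0 < \<kappa> * u y / \<kappa> - ((u\<^sub>0 + R) * 1 - sqrt (R\<^sup>2 - y\<^sup>2))" if y: "0 < y" "y < a" for y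
        using E[OF y] k by simp
      show "((\<lambda>x. s x / \<kappa> - ((u\<^sub>0 + R) * x - Qf R x)) \<longlongrightarrow> cos \<gamma> / \<kappa> - ((u\<^sub>0 + R) * a - Qf R a)) (at_left a)"
        using continuous_on_Icc_at_leftD[OF Qc[of a] a0] aR k
        by (intro tendsto_intros slim) auto
    qed (use a0 in simp)
    then have "(u\<^sub>0 + R) * a - Qf R a < cos \<gamma> / \<kappa>" using s0 Qf_0 by simp
    moreover have "a * (R + u\<^sub>0\<^sub>p) - Qf R a = cos \<gamma> / \<kappa>"
      using assms(11) capF_eq by (simp add: R_def)
    ultimately have "a * u\<^sub>0 < a * u\<^sub>0\<^sub>p" by (simp add: algebra_simps)
    then show ?thesis using a0 by simp
  qed

  have part3: "u\<^sub>0\<^sub>p < cos \<gamma> / (a * \<kappa>)"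
  proof -
    have "R * 0 - Qf R 0 < R * a - Qf R a"
    proof (rule incr[where f="\<lambda>x. R * x - Qf R x" and f'="\<lambda>x. R * 1 - sqrt (R\<^sup>2 - x\<^sup>2)"])
      show "continuous_on {0..a} (\<lambda>x. R * x - Qf R x)"
        using Qc[of a] aR by (intro continuous_intros) auto
      show "((\<lambda>x. R * x - Qf R x) has_real_derivative R * 1 - sqrt (R\<^sup>2 - y\<^sup>2)) (at y)"
        if y: "0 < y" "y < a" for y
        using y aR Rpos by (intro DERIV_diff DERIV_cmult DERIV_ident Qf_deriv) auto
      show "0 < R * 1 - sqrt (R\<^sup>2 - y\<^sup>2)" if y: "0 < y" "y < a" for y
      proof -
        have "R\<^sup>2 - y\<^sup>2 < R\<^sup>2" using y by simp
        then have "sqrt (R\<^sup>2 - y\<^sup>2) < sqrt (R\<^sup>2)" by (rule real_sqrt_less_mono)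
        then show ?thesis using Rpos by simp
      qed
    qed (use a0 in simp)
    then have "0 < R * a - Qf R a" using Qf_0 by simp
    moreover have "a * (R + u\<^sub>0\<^sub>p) - Qf R a = cos \<gamma> / \<kappa>"
      using assms(11) capF_eq by (simp add: R_def)
    ultimately have "a * u\<^sub>0\<^sub>p < cos \<gamma> / \<kappa>" by (simp add: algebra_simps)
    then show ?thesis using a0 k by (simp add: field_simps)
  qed

  define R' where "R' = a / cos \<gamma>"
  have R'a: "a \<le> R'" using cg a0 by (simp add: R'_def field_simps)
  have R'pos: "R' > 0" using a0 R'a by simp

  have conv: "s b < b * cos \<gamma> / a" if b: "0 < b" "b < a" for b
  proof -
    have "0 * (\<kappa> * u b) - s 0 < b * (\<kappa> * u b) - s b"
    proof (rule incr[where f="\<lambda>x. x * (\<kappa> * u b) - s x" and f'="\<lambda>x. 1 * (\<kappa> * u b) - \<kappa> * u x"])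
      show "continuous_on {0..b} (\<lambda>x. x * (\<kappa> * u b) - s x)"
        using csb b by (intro continuous_intros) auto
      show "((\<lambda>x. x * (\<kappa> * u b) - s x) has_real_derivative 1 * (\<kappa> * u b) - \<kappa> * u y) (at y)"
        if y: "0 < y" "y < b" for y
        using y b by (intro DERIV_diff DERIV_cmult_right DERIV_ident ds) auto
      show "0 < 1 * (\<kappa> * u b) - \<kappa> * u y" if y: "0 < y" "y < b" for y
        using uinc[of y b] y b k by simp
    qed (use b in simp)
    then have N: "s b / b < \<kappa> * u b" using s0 b by (simp add: field_simps)
    have "s b - s b / b * b < cos \<gamma> - s b / b * a"
    proof (rule inc_lim[where f="\<lambda>t. s t - s b / b * t" and f'="\<lambda>t. \<kappa> * u t - s b / b * 1"])
      show "continuous_on {b..c} (\<lambda>t. s t - s b / b * t)" if "c < a" for c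
      proof -
        have "continuous_on {b..c} s" by (rule continuous_on_subset[OF cs]) (use that b in auto)
        then show ?thesis by (intro continuous_intros)
      qed
      show "((\<lambda>t. s t - s b / b * t) has_real_derivative \<kappa> * u y - s b / b * 1) (at y)"
        if y: "b < y" "y < a" for y
        using y b by (intro DERIV_diff DERIV_cmult DERIV_ident ds) auto
      show "0 < \<kappa> * u y - s b / b * 1" if y: "b < y" "y < a" for y
      proof -
        have "u b < u y" using uinc[of b y] y b by simp
        then have "\<kappa> * u b < \<kappa> * u y" using k by simp
        then show ?thesis using N by simp
      qed
      show "((\<lambda>t. s t - s b / b * t) \<longlongrightarrow> cos \<gamma> - s b / b * a) (at_left a)"
        by (intro tendsto_intros slim)
    qed (use b in simp)
    then have "s b / b * a < cos \<gamma>" using b by simp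
    then show ?thesis using b a0 by (simp add: field_simps)
  qed

  have E2: "u b < u\<^sub>0 + R' - sqrt (R'\<^sup>2 - b\<^sup>2)" if b: "0 < b" "b < a" for b
  proof -
    have "(u\<^sub>0 + R' - sqrt (R'\<^sup>2 - 0\<^sup>2)) - u 0 < (u\<^sub>0 + R' - sqrt (R'\<^sup>2 - b\<^sup>2)) - u b"
    proof (rule incr[where f="\<lambda>x. (u\<^sub>0 + R' - sqrt (R'\<^sup>2 - x\<^sup>2)) - u x"
          and f'="\<lambda>x. x / sqrt (R'\<^sup>2 - x\<^sup>2) - u' x"])
      show "continuous_on {0..b} (\<lambda>x. (u\<^sub>0 + R' - sqrt (R'\<^sup>2 - x\<^sup>2)) - u x)"
        using cub b by (intro continuous_intros) auto
      show "((\<lambda>x. (u\<^sub>0 + R' - sqrt (R'\<^sup>2 - x\<^sup>2)) - u x) has_real_derivative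
          y / sqrt (R'\<^sup>2 - y\<^sup>2) - u' y) (at y)" if y: "0 < y" "y < b" for y
        using y b R'a R'pos by (intro DERIV_diff du circ_deriv) auto
      show "0 < y / sqrt (R'\<^sup>2 - y\<^sup>2) - u' y" if y: "0 < y" "y < b" for y
      proof -
        have yR: "y < R'" using y b R'a by simp
        have "y * cos \<gamma> / a = y / R'" using cg a0 by (simp add: R'_def)
        then have "s y < (y / sqrt (R'\<^sup>2 - y\<^sup>2)) / sqrt (1 + (y / sqrt (R'\<^sup>2 - y\<^sup>2))\<^sup>2)"
          using phi_q[of y R'] conv[of y] y b yR by simp
        then have "u' y < y / sqrt (R'\<^sup>2 - y\<^sup>2)" unfolding s_def by (rule phi_lt)
        then show ?thesis by simp
      qed
    qed (use b in simp)
    then show ?thesis using assms(8) R'pos by simp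
  qed

  have Qc': "continuous_on {0..a} (Qf R')"
    by (rule continuous_on_subset[OF Qf_cont[OF R'pos]]) (use R'a a0 in auto)
  have part1a: "cos \<gamma> / \<kappa> < (u\<^sub>0 + R') * a - Qf R' a"
  proof -
    have "((u\<^sub>0 + R') * 0 - Qf R' 0) - s 0 / \<kappa> < ((u\<^sub>0 + R') * a - Qf R' a) - cos \<gamma> / \<kappa>"
    proof (rule inc_lim[where f="\<lambda>x. ((u\<^sub>0 + R') * x - Qf R' x) - s x / \<kappa>"
          and f'="\<lambda>x. ((u\<^sub>0 + R') * 1 - sqrt (R'\<^sup>2 - x\<^sup>2)) - \<kappa> * u x / \<kappa>"])
      show "continuous_on {0..b} (\<lambda>x. ((u\<^sub>0 + R') * x - Qf R' x) - s x / \<kappa>)" if "b < a" for b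
        using csb[OF that] continuous_on_subset[OF Qc', of "{0..b}"] that k by (intro continuous_intros) auto
      show "((\<lambda>x. ((u\<^sub>0 + R') * x - Qf R' x) - s x / \<kappa>) has_real_derivative
          ((u\<^sub>0 + R') * 1 - sqrt (R'\<^sup>2 - y\<^sup>2)) - \<kappa> * u y / \<kappa>) (at y)" if y: "0 < y" "y < a" for y
        using y R'a R'pos
        by (intro DERIV_diff DERIV_cdivide ds DERIV_cmult DERIV_ident Qf_deriv) auto
      show "0 < ((u\<^sub>0 + R') * 1 - sqrt (R'\<^sup>2 - y\<^sup>2)) - \<kappa> * u y / \<kappa>" if y: "0 < y" "y < a" for y
        using E2[OF y] k by simp
      show "((\<lambda>x. ((u\<^sub>0 + R') * x - Qf R' x) - s x / \<kappa>) \<longlongrightarrow> ((u\<^sub>0 + R') * a - Qf R' a) - cos \<gamma> / \<kappa>) (at_left a)"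
        using continuous_on_Icc_at_leftD[OF Qc' a0] k
        by (intro tendsto_intros slim) auto
    qed (use a0 in simp)
    then show ?thesis using s0 Qf_0 by simp
  qed

  have ac: "a / R' = cos \<gamma>" using a0 cg by (simp add: R'_def)
  have arc: "arcsin (cos \<gamma>) = pi / 2 - \<gamma>"
    using arcsin_sin[of "pi/2 - \<gamma>"] assms(4,5) by (simp add: sin_cos_eq)
  have sg: "sin \<gamma> \<ge> 0" using assms(4,5) by (intro sin_ge_zero) auto
  have tq: "sqrt (R'\<^sup>2 - a\<^sup>2) = a * tan \<gamma>"
  proof -
    have "(a * tan \<gamma>)\<^sup>2 = a\<^sup>2 * (sin \<gamma>)\<^sup>2 / (cos \<gamma>)\<^sup>2"
      by (simp add: tan_def power_divide power_mult_distrib)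
    also have "\<dots> = a\<^sup>2 * (1 - (cos \<gamma>)\<^sup>2) / (cos \<gamma>)\<^sup>2" by (simp add: sin_squared_eq)
    also have "\<dots> = R'\<^sup>2 - a\<^sup>2" using cg by (simp add: R'_def power_divide field_simps)
    finally have "R'\<^sup>2 - a\<^sup>2 = (a * tan \<gamma>)\<^sup>2" by simp
    moreover have "a * tan \<gamma> \<ge> 0" using a0 sg cg by (simp add: tan_def)
    ultimately show ?thesis by simp
  qed
  have Qa: "Qf R' a = a * (a * tan \<gamma>) / 2 + (a / cos \<gamma>)\<^sup>2 / 2 * (pi / 2 - \<gamma>)"
    unfolding Qf_def tq ac arc by (simp add: R'_def)
  have part1: "cos \<gamma> / (a * \<kappa>) - a / cos \<gamma> + a * tan \<gamma> / 2
           + a / (2 * (cos \<gamma>)\<^sup>2) * (pi / 2 - \<gamma>) < u\<^sub>0"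
    by (rule alg[OF a0 cg k]) (use part1a Qa in \<open>simp add: R'_def\<close>)
  show ?thesis using part1 part2 part3 by simp
qed

end
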